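(* Let $\varepsilon>0$, $\beta>0$ and let $\alpha$ be a sufficiently large constant. Let $d$ be large, and let $\mathcal{G}$ be a graph on $\alpha d$ vertices with $\Delta(\mathcal{G})\le\beta\delta(\mathcal{G})$ and $\delta(\mathcal{G})>d^{\varepsilon}$; set $p^-=\delta(\mathcal{G})/(\alpha d)$. Let $G$ be a bipartite graph with stable sets $X$ and $Y$ and maximum degree $d$. Let $\chi$ be a random coloring of $Y$ in which each vertex independently receives a color chosen uniformly at random from $V(\mathcal{G})$. For $x\in X$ and $c\in V(\mathcal{G})$ let $W_{x,c}$ be the number of $y\in N_G(x)$ such that (1) $y$ is the only vertex of color $\chi(y)$ in $N_G(x)$; (2) $\mathbf{Bad}(y,\chi,G)\leq d/\sqrt{\alpha}$; and (3) $c\,\chi(y)\in E(\mathcal{G})$. If $x\in X$ satisfies $d\leq 2d_G(x)$, then for every $c\in V(\mathcal{G})$, $$\Pr\left(W_{x,c}\leq \frac{p^- d_G(x)}{2}\right)=e^{-\Omega(\delta(\mathcal{G}))}.$$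
   Context: For a graph $G$, a partial vertex coloring $\chi$ of $G$ and a colored vertex $v$, $\mathbf{Bad}(v,\chi,G)$ is the number of vertices $u\in N_G(v)$ for which there exists $v'\in N_G(u)$ with $v'\neq v$ and $\chi(v')=\chi(v)$ (i.e. the color of $v$ appears more than once in $N_G(u)$). $N_G(v)$ is the neighbourhood and $d_G(v)$ the degree of $v$ in $G$. Asymptotic notation is as $d\to\infty$ with $\alpha,\beta,\varepsilon$ fixed. *)

theory Defs
  imports "HOL-Probability.Probability"
begin

definition simple_graph :: "nat set \<Rightarrow> (nat \<Rightarrow> nat \<Rightarrow> bool) \<Rightarrow> bool" where
  "simple_graph V E \<longleftrightarrow> finite V \<and> (\<forall>u v. E u v \<longrightarrow> u \<in> V \<and> v \<in> V)
     \<and> (\<forall>u v. E u v \<longrightarrow> E v u) \<and> (\<forall>v. \<not> E v v)"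

definition nbhd :: "(nat \<Rightarrow> nat \<Rightarrow> bool) \<Rightarrow> nat \<Rightarrow> nat set" where
  "nbhd E v = {u. E v u}"

definition deg :: "(nat \<Rightarrow> nat \<Rightarrow> bool) \<Rightarrow> nat \<Rightarrow> nat" where
  "deg E v = card (nbhd E v)"

definition min_deg :: "nat set \<Rightarrow> (nat \<Rightarrow> nat \<Rightarrow> bool) \<Rightarrow> nat" where
  "min_deg V E = Min (deg E ` V)"

definition max_deg :: "nat set \<Rightarrow> (nat \<Rightarrow> nat \<Rightarrow> bool) \<Rightarrow> nat" where
  "max_deg V E = Max (deg E ` V)"

definition bipartite_graph :: "nat set \<Rightarrow> nat set \<Rightarrow> (nat \<Rightarrow> nat \<Rightarrow> bool) \<Rightarrow> bool" where
  "bipartite_graph X Y E \<longleftrightarrow> simple_graph (X \<union> Y) E \<and> X \<inter> Y = {}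
     \<and> (\<forall>u v. E u v \<longrightarrow> (u \<in> X \<and> v \<in> Y) \<or> (u \<in> Y \<and> v \<in> X))"

text \<open>Bad(v, chi, G) for a partial colouring chi whose set of coloured vertices is D:
  the number of neighbours u of v such that some v' in N(u), v' \<noteq> v, is coloured with chi v.\<close>
definition Bad :: "(nat \<Rightarrow> nat \<Rightarrow> bool) \<Rightarrow> nat set \<Rightarrow> (nat \<Rightarrow> nat) \<Rightarrow> nat \<Rightarrow> nat" where
  "Bad E D col v = card {u \<in> nbhd E v. \<exists>v' \<in> nbhd E u. v' \<noteq> v \<and> v' \<in> D \<and> col v' = col v}"

text \<open>W_{x,c}: G has adjacency EG, colours live in the graph H (adjacency EH), Y is coloured.\<close>
definition W :: "(nat \<Rightarrow> nat \<Rightarrow> bool) \<Rightarrow> nat set \<Rightarrow> (nat \<Rightarrow> nat \<Rightarrow> bool) \<Rightarrow> real \<Rightarrow> nat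
                 \<Rightarrow> (nat \<Rightarrow> nat) \<Rightarrow> nat \<Rightarrow> nat \<Rightarrow> nat" where
  "W EG Y EH \<alpha> d col x c = card {y \<in> nbhd EG x.
       (\<forall>y' \<in> nbhd EG x. y' \<noteq> y \<longrightarrow> col y' \<noteq> col y)
     \<and> real (Bad EG Y col y) \<le> real d / sqrt \<alpha>
     \<and> EH c (col y)}"

text \<open>Uniform random colouring of Y with colours from VH, independently per vertex.\<close>
definition random_colouring :: "nat set \<Rightarrow> nat set \<Rightarrow> (nat \<Rightarrow> nat) pmf" where
  "random_colouring Y VH = pmf_of_set (Y \<rightarrow>\<^sub>E VH)"

end

theory Submission
  imports Defs
begin


lemma split_PiE_sum:
  fixes F :: "(nat \<Rightarrow> nat) \<Rightarrow> 'c::comm_monoid_add"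
  assumes "A \<inter> B = {}"
  shows "(\<Sum>f\<in>PiE (A \<union> B) (\<lambda>_. V). F f) =
         (\<Sum>g\<in>PiE B (\<lambda>_. V). \<Sum>h\<in>PiE A (\<lambda>_. V). F (\<lambda>i. if i \<in> A then h i else g i))"
proof -
  have mg: "(\<lambda>i. if i \<in> A then restrict f A i else restrict f B i) = f" if "f \<in> PiE (A \<union> B) (\<lambda>_. V)" for f
    using that by (auto simp: PiE_def extensional_def restrict_def fun_eq_iff)
  have "(\<Sum>f\<in>PiE (A \<union> B) (\<lambda>_. V). F f) =
        (\<Sum>(h,g)\<in>PiE A (\<lambda>_. V) \<times> PiE B (\<lambda>_. V). F (\<lambda>i. if i \<in> A then h i else g i))"
    apply (rule sum.reindex_bij_witness[of _ "\<lambda>(h,g). (\<lambda>i. if i \<in> A then h i else g i)"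
           "\<lambda>f. (restrict f A, restrict f B)"])
    subgoal using mg by simp
    subgoal by (auto simp: PiE_def extensional_def)
    subgoal using assms by (auto simp: PiE_def extensional_def restrict_def fun_eq_iff)
    subgoal using assms by (auto simp: PiE_def extensional_def restrict_def fun_eq_iff)
    subgoal using mg by simp
    done
  also have "\<dots> = (\<Sum>h\<in>PiE A (\<lambda>_. V). \<Sum>g\<in>PiE B (\<lambda>_. V). F (\<lambda>i. if i \<in> A then h i else g i))"
    by (simp add: sum.cartesian_product)
  also have "\<dots> = (\<Sum>g\<in>PiE B (\<lambda>_. V). \<Sum>h\<in>PiE A (\<lambda>_. V). F (\<lambda>i. if i \<in> A then h i else g i))"
    by (rule sum.swap)
  finally show ?thesis .
qed

lemma prob_markov:
  assumes "finite F" "F \<noteq> {}" "\<And>x. x \<in> F \<Longrightarrow> h x \<ge> 0" "\<And>x. x \<in> F \<Longrightarrow> x \<in> E \<Longrightarrow> 1 \<le> h x"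
  shows "measure_pmf.prob (pmf_of_set F) E \<le> (\<Sum>x\<in>F. h x) / card F"
proof -
  have "real (card (F \<inter> E)) = (\<Sum>x\<in>F \<inter> E. 1)" by simp
  also have "\<dots> \<le> (\<Sum>x\<in>F \<inter> E. h x)" using assms by (intro sum_mono) auto
  also have "\<dots> \<le> (\<Sum>x\<in>F. h x)" using assms by (intro sum_mono2) auto
  finally show ?thesis using assms
    by (simp add: measure_pmf_of_set divide_right_mono)
qed

lemma fact_lower: "real q ^ q \<le> exp (real q) * fact q"
proof -
  have sm: "(\<lambda>n. real q ^ n /\<^sub>R fact n) sums exp (real q)" by (rule exp_converges)
  have "sum (\<lambda>n. real q ^ n /\<^sub>R fact n) {q} \<le> exp (real q)"
    using sum_le_suminf[OF sums_summable[OF sm], of "{q}"] sums_unique[OF sm] by simp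
  then have "real q ^ q / fact q \<le> exp (real q)" by (simp add: divide_inverse mult.commute)
  then show ?thesis by (simp add: divide_le_eq mult.commute)
qed



lemma prod_if_pow: "finite Y \<Longrightarrow> (\<Prod>y\<in>Y. if P y then (c::real) else 1) = c ^ card {y\<in>Y. P y}"
  by (simp add: prod.inter_filter[symmetric])

lemma sum_if_const: "finite V \<Longrightarrow> A \<subseteq> V \<Longrightarrow> (\<Sum>a\<in>V. if a \<in> A then (c::real) else 1) = real (card A) * c + (real (card V) - real (card A))"
proof -
  assume f: "finite V" and s: "A \<subseteq> V"
  have "(\<Sum>a\<in>V. if a \<in> A then (c::real) else 1) = (\<Sum>a\<in>A. c) + (\<Sum>a\<in>V - A. 1)"
    using f s by (simp add: sum.If_cases Int_absorb1 Int_absorb2 Diff_eq[symmetric] Int_commute)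
  also have "\<dots> = real (card A) * c + (real (card V) - real (card A))"
    using f s by (simp add: card_Diff_subset finite_subset of_nat_diff card_mono)
  finally show ?thesis .
qed

lemma exp_half: "exp (-(1/2::real)) \<le> 2/3"
proof -
  have "3/2 \<le> exp (1/2::real)" using exp_ge_add_one_self[of "1/2::real"] by simp
  then show ?thesis by (simp add: exp_minus field_simps)
qed

lemma T_sum_bound:
  assumes fY: "finite Y" and SY: "S \<subseteq> Y" and fV: "finite V" and AV: "A \<subseteq> V" and Vne: "V \<noteq> {}"
  shows "(\<Sum>col\<in>PiE Y (\<lambda>_. V). exp (-(1/2) * real (card {y\<in>S. col y \<in> A})))
          \<le> real (card V) ^ card Y * exp (- (real (card S) * card A / card V) / 3)"
proof -
  define e where "e = exp (-(1/2::real))"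
  define n where "n = real (card V)"
  have n0: "n > 0" using fV Vne by (simp add: n_def card_gt_0_iff)
  have "exp (-(1/2) * real (card {y\<in>S. col y \<in> A})) = (\<Prod>y\<in>Y. if y \<in> S \<and> col y \<in> A then e else 1)" for col
  proof -
    have "{y\<in>Y. y \<in> S \<and> col y \<in> A} = {y\<in>S. col y \<in> A}" using SY by auto
    then show ?thesis using fY
      by (simp add: prod_if_pow e_def exp_of_nat_mult[symmetric] mult.commute)
  qed
  then have "(\<Sum>col\<in>PiE Y (\<lambda>_. V). exp (-(1/2) * real (card {y\<in>S. col y \<in> A})))
      = (\<Sum>col\<in>PiE Y (\<lambda>_. V). \<Prod>y\<in>Y. if y \<in> S \<and> col y \<in> A then e else 1)" by simp
  also have "\<dots> = (\<Prod>y\<in>Y. \<Sum>a\<in>V. if y \<in> S \<and> a \<in> A then e else 1)"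
    using fY fV by (simp add: prod_sum_PiE)
  also have "\<dots> = (\<Prod>y\<in>Y. if y \<in> S then card A * e + (n - card A) else n)"
    using sum_if_const[OF fV AV, of e] by (intro prod.cong) (auto simp: n_def)
  also have "\<dots> = (card A * e + (n - card A)) ^ card S * n ^ card (Y - S)"
  proof -
    have "(\<Prod>y\<in>Y. if y \<in> S then card A * e + (n - card A) else n) =
          (\<Prod>y\<in>Y \<inter> {y. y \<in> S}. card A * e + (n - card A)) * (\<Prod>y\<in>Y \<inter> - {y. y \<in> S}. n)"
      using fY by (rule prod.If_cases)
    moreover have "Y \<inter> {y. y \<in> S} = S" "Y \<inter> - {y. y \<in> S} = Y - S" using SY by auto
    ultimately show ?thesis by simp
  qed
  also have "\<dots> \<le> (n * exp (- (card A / n) / 3)) ^ card S * n ^ card (Y - S)"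
  proof -
    have e23: "e \<le> 2/3" using exp_half by (simp add: e_def)
    have c0: "0 \<le> card A * e + (n - card A)"
    proof -
      have "real (card A) \<le> n" using AV fV by (simp add: n_def card_mono)
      then show ?thesis by (simp add: e_def add_nonneg_nonneg)
    qed
    have "card A * e + (n - card A) \<le> n * (1 + (- (card A / n) / 3))"
    proof -
      have "card A * e \<le> card A * (2/3)" using e23 by (intro mult_left_mono) auto
      then show ?thesis using n0 by (simp add: field_simps)
    qed
    also have "\<dots> \<le> n * exp (- (card A / n) / 3)"
      using n0 exp_ge_add_one_self[of "- (card A / n) / 3"] by (intro mult_left_mono) auto
    finally show ?thesis using c0 n0 by (intro mult_right_mono power_mono) auto
  qed
  also have "\<dots> = n ^ card Y * exp (- (real (card S) * card A / n) / 3)"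
  proof -
    have "card Y = card S + card (Y - S)" using fY SY by (metis card_Diff_subset card_mono finite_subset le_add_diff_inverse)
    then show ?thesis
      by (simp add: power_mult_distrib power_add exp_of_nat_mult[symmetric] algebra_simps)
  qed
  finally show ?thesis by (simp add: n_def)
qed



definition bb :: "(nat \<Rightarrow> nat \<Rightarrow> bool) \<Rightarrow> nat set \<Rightarrow> nat set \<Rightarrow> (nat \<Rightarrow> nat) \<Rightarrow> nat \<Rightarrow> nat \<Rightarrow> nat" where
  "bb E Y S col y a = card {u \<in> nbhd E y. \<exists>v' \<in> nbhd E u. v' \<in> Y - S \<and> col v' = a}"

lemma bb_merge: "bb E Y S (\<lambda>i. if i \<in> S then h i else g i) y a = bb E Y S g y a"
  unfolding bb_def by (rule arg_cong[where f=card]) auto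

definition zz :: "(nat \<Rightarrow> nat \<Rightarrow> bool) \<Rightarrow> nat set \<Rightarrow> nat set \<Rightarrow> nat set \<Rightarrow> (nat \<Rightarrow> nat) \<Rightarrow> nat \<Rightarrow> real" where
  "zz E Y S A g y = (\<Sum>u\<in>nbhd E y. \<Sum>v'\<in>Y - S. if v' \<in> nbhd E u \<and> g v' \<in> A then 1 else 0)"

lemma card_filter_sum: "finite B \<Longrightarrow> real (card {x\<in>B. P x}) = (\<Sum>x\<in>B. if P x then 1 else 0)"
  by (simp add: sum.inter_filter[symmetric])

lemma bb_sum_le:
  assumes fin: "\<And>v. finite (nbhd E v)" and fY: "finite Y" and fA: "finite A"
  shows "(\<Sum>a\<in>A. real (bb E Y S g y a)) \<le> zz E Y S A g y"
proof -
  let ?B = "Y - S"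
  have fB: "finite ?B" using fY by simp
  have "real (bb E Y S g y a) \<le> (\<Sum>u\<in>nbhd E y. \<Sum>v'\<in>?B. if v' \<in> nbhd E u \<and> g v' = a then 1 else 0)" for a
  proof -
    have "real (bb E Y S g y a) = (\<Sum>u\<in>nbhd E y. if \<exists>v' \<in> nbhd E u. v' \<in> ?B \<and> g v' = a then 1 else 0)"
      unfolding bb_def using fin by (rule card_filter_sum)
    also have "\<dots> \<le> (\<Sum>u\<in>nbhd E y. \<Sum>v'\<in>?B. if v' \<in> nbhd E u \<and> g v' = a then 1 else 0)"
    proof (rule sum_mono)
      fix u
      show "(if \<exists>v' \<in> nbhd E u. v' \<in> ?B \<and> g v' = a then 1 else 0) \<le> (\<Sum>v'\<in>?B. if v' \<in> nbhd E u \<and> g v' = a then 1::real else 0)"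
      proof (cases "\<exists>v' \<in> nbhd E u. v' \<in> ?B \<and> g v' = a")
        case True
        then obtain v0 where v0: "v0 \<in> nbhd E u" "v0 \<in> ?B" "g v0 = a" by blast
        have "(if v0 \<in> nbhd E u \<and> g v0 = a then 1::real else 0) \<le> (\<Sum>v'\<in>?B. if v' \<in> nbhd E u \<and> g v' = a then 1::real else 0)"
          using fB v0 by (intro member_le_sum) auto
        then show ?thesis using True v0 by simp
      next
        case False
        show ?thesis by (subst if_not_P[OF False]) (simp add: sum_nonneg)
      qed
    qed
    finally show ?thesis .
  qed
  then have "(\<Sum>a\<in>A. real (bb E Y S g y a)) \<le> (\<Sum>a\<in>A. \<Sum>u\<in>nbhd E y. \<Sum>v'\<in>?B. if v' \<in> nbhd E u \<and> g v' = a then 1 else 0)"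
    by (rule sum_mono)
  also have "\<dots> = (\<Sum>u\<in>nbhd E y. \<Sum>v'\<in>?B. \<Sum>a\<in>A. if v' \<in> nbhd E u \<and> g v' = a then 1 else 0)"
    by (simp add: sum.swap[of _ A])
  also have "\<dots> = zz E Y S A g y"
    unfolding zz_def using fA
    by (intro sum.cong refl) (auto simp: sum.delta' intro!: sum.neutral)
  finally show ?thesis .
qed

definition ww :: "(nat \<Rightarrow> nat \<Rightarrow> bool) \<Rightarrow> nat set \<Rightarrow> nat \<Rightarrow> real" where
  "ww E S v' = (\<Sum>y\<in>S. \<Sum>u\<in>nbhd E y. if v' \<in> nbhd E u then 1 else 0)"

lemma zz_sum:
  "(\<Sum>y\<in>S. zz E Y S A g y) = (\<Sum>v'\<in>Y - S. ww E S v' * (if g v' \<in> A then 1 else 0))"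
proof -
  have "(\<Sum>y\<in>S. zz E Y S A g y) = (\<Sum>y\<in>S. \<Sum>u\<in>nbhd E y. \<Sum>v'\<in>Y - S. (if v' \<in> nbhd E u then 1 else 0) * (if g v' \<in> A then 1 else (0::real)))"
    unfolding zz_def by (intro sum.cong refl) auto
  also have "\<dots> = (\<Sum>y\<in>S. \<Sum>v'\<in>Y - S. \<Sum>u\<in>nbhd E y. (if v' \<in> nbhd E u then 1 else 0) * (if g v' \<in> A then 1 else (0::real)))"
    by (intro sum.cong refl sum.swap)
  also have "\<dots> = (\<Sum>v'\<in>Y - S. \<Sum>y\<in>S. \<Sum>u\<in>nbhd E y. (if v' \<in> nbhd E u then 1 else 0) * (if g v' \<in> A then 1 else (0::real)))"
    by (rule sum.swap)
  also have "\<dots> = (\<Sum>v'\<in>Y - S. ww E S v' * (if g v' \<in> A then 1 else 0))"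
    unfolding ww_def by (simp add: sum_distrib_right)
  finally show ?thesis .
qed

lemma ww_le:
  assumes sym: "\<And>u v. E u v \<Longrightarrow> E v u" and fin: "\<And>v. finite (nbhd E v)" and deg: "\<And>v. card (nbhd E v) \<le> d"
    and fS: "finite S"
  shows "ww E S v' \<le> real d ^ 2"
proof -
  have "ww E S v' = (\<Sum>y\<in>S. \<Sum>u\<in>nbhd E v'. if u \<in> nbhd E y then 1 else 0)"
  proof -
    have "(\<Sum>u\<in>nbhd E y. if v' \<in> nbhd E u then 1 else 0) = (\<Sum>u\<in>nbhd E v'. if u \<in> nbhd E y then 1 else (0::real))" for y
    proof -
      have "(\<Sum>u\<in>nbhd E y. if v' \<in> nbhd E u then 1 else 0) = real (card {u \<in> nbhd E y. v' \<in> nbhd E u})"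
        using fin by (simp add: card_filter_sum)
      also have "{u \<in> nbhd E y. v' \<in> nbhd E u} = {u \<in> nbhd E v'. u \<in> nbhd E y}"
        using sym by (auto simp: nbhd_def)
      also have "real (card \<dots>) = (\<Sum>u\<in>nbhd E v'. if u \<in> nbhd E y then 1 else (0::real))"
        using fin by (simp add: card_filter_sum)
      finally show ?thesis .
    qed
    then show ?thesis unfolding ww_def by simp
  qed
  also have "\<dots> = (\<Sum>u\<in>nbhd E v'. \<Sum>y\<in>S. if u \<in> nbhd E y then 1 else 0)"
    by (rule sum.swap)
  also have "\<dots> \<le> (\<Sum>u\<in>nbhd E v'. real d)"
  proof (rule sum_mono)
    fix u
    have "(\<Sum>y\<in>S. if u \<in> nbhd E y then 1 else (0::real)) = real (card {y\<in>S. u \<in> nbhd E y})"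
      using fS by (simp add: card_filter_sum)
    also have "{y\<in>S. u \<in> nbhd E y} \<subseteq> nbhd E u" using sym by (auto simp: nbhd_def)
    then have "card {y\<in>S. u \<in> nbhd E y} \<le> card (nbhd E u)" using fin by (intro card_mono) auto
    then have "real (card {y\<in>S. u \<in> nbhd E y}) \<le> real d" using deg[of u] by simp
    finally show "(\<Sum>y\<in>S. if u \<in> nbhd E y then 1 else (0::real)) \<le> real d" .
  qed
  also have "\<dots> \<le> real d ^ 2" using deg[of v'] by (simp add: power2_eq_square mult_right_mono)
  finally show ?thesis .
qed

lemma ww_sum_le:
  assumes fin: "\<And>v. finite (nbhd E v)" and deg: "\<And>v. card (nbhd E v) \<le> d" and fY: "finite Y"
  shows "(\<Sum>v'\<in>Y - S. ww E S v') \<le> real (card S) * real d ^ 2"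
proof -
  have "(\<Sum>v'\<in>Y - S. ww E S v') = (\<Sum>y\<in>S. \<Sum>u\<in>nbhd E y. \<Sum>v'\<in>Y - S. if v' \<in> nbhd E u then 1 else 0)"
    unfolding ww_def by (simp add: sum.swap[of _ "Y - S"])
  also have "\<dots> \<le> (\<Sum>y\<in>S. \<Sum>u\<in>nbhd E y. real d)"
  proof (intro sum_mono)
    fix y u
    have "(\<Sum>v'\<in>Y - S. if v' \<in> nbhd E u then 1 else (0::real)) = real (card {v' \<in> Y - S. v' \<in> nbhd E u})"
      using card_filter_sum[of "Y - S" "\<lambda>v'. v' \<in> nbhd E u"] fY by simp
    also have "card {v' \<in> Y - S. v' \<in> nbhd E u} \<le> card (nbhd E u)" using fin by (intro card_mono) auto
    then have "real (card {v' \<in> Y - S. v' \<in> nbhd E u}) \<le> real d" using deg[of u] by simp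
    finally show "(\<Sum>v'\<in>Y - S. if v' \<in> nbhd E u then 1 else (0::real)) \<le> real d" .
  qed
  also have "\<dots> \<le> (\<Sum>y\<in>S. real d * real d)"
    using deg by (intro sum_mono) (simp add: mult_right_mono)
  also have "\<dots> \<le> real (card S) * real d ^ 2" by (simp add: power2_eq_square)
  finally show ?thesis .
qed



lemma exp_le_lin: "0 \<le> x \<Longrightarrow> x \<le> 1 \<Longrightarrow> exp (x::real) \<le> 1 + 2 * x"
  using exp_bound[of x] by (smt (verit) mult_left_le power2_eq_square)

lemma U_sum_bound:
  fixes t :: real
  assumes fY: "finite Y" and SY: "S \<subseteq> Y" and fV: "finite V" and AV: "A \<subseteq> V" and Vne: "V \<noteq> {}"
    and t0: "t > 0"
    and sym: "\<And>u v. E u v \<Longrightarrow> E v u" and fin: "\<And>v. finite (nbhd E v)" and deg: "\<And>v. card (nbhd E v) \<le> d"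
    and small: "(exp 1 - 1) * real d ^ 2 \<le> t * real (card V)"
  shows "(\<Sum>col\<in>PiE Y (\<lambda>_. V). exp (real (card {y\<in>S. col y \<in> A \<and> t < real (bb E Y S col y (col y))})))
          \<le> real (card V) ^ card Y * exp (2 * (exp 1 - 1) * card A * card S * real d ^ 2 / (t * real (card V) ^ 2))"
proof -
  define n where "n = real (card V)"
  define e1 where "e1 = exp 1 - (1::real)"
  define B where "B = Y - S"
  define lam where "lam = e1 / (t * n)"
  define ell where "ell g y = card {a\<in>A. t < real (bb E Y S g y a)}" for g y
  have n0: "n > 0" using fV Vne by (simp add: n_def card_gt_0_iff)
  have e10: "e1 \<ge> 0" unfolding e1_def by simp
  have fS: "finite S" using fY SY finite_subset by blast
  have fA: "finite A" using fV AV finite_subset by blast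
  have fB: "finite B" using fY by (simp add: B_def)
  have YSB: "S \<union> B = Y" "S \<inter> B = {}" using SY by (auto simp: B_def)
  have lam0: "lam \<ge> 0" using e10 t0 n0 by (simp add: lam_def)
  have "exp (real (card {y\<in>S. P y})) = (\<Prod>y\<in>S. if P y then exp 1 else 1)" for P
    using fS by (simp add: prod_if_pow exp_of_nat_mult[symmetric])
  then have "(\<Sum>col\<in>PiE Y (\<lambda>_. V). exp (real (card {y\<in>S. col y \<in> A \<and> t < real (bb E Y S col y (col y))})))
     = (\<Sum>col\<in>PiE (S \<union> B) (\<lambda>_. V). \<Prod>y\<in>S. if col y \<in> A \<and> t < real (bb E Y S col y (col y)) then exp 1 else 1)"
    using YSB by simp
  also have "\<dots> = (\<Sum>g\<in>PiE B (\<lambda>_. V). \<Sum>h\<in>PiE S (\<lambda>_. V). \<Prod>y\<in>S. if h y \<in> A \<and> t < real (bb E Y S g y (h y)) then exp 1 else 1)"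
    by (subst split_PiE_sum[OF YSB(2)]) (intro sum.cong refl prod.cong, auto simp: bb_merge)
  also have "\<dots> = (\<Sum>g\<in>PiE B (\<lambda>_. V). \<Prod>y\<in>S. \<Sum>a\<in>V. if a \<in> A \<and> t < real (bb E Y S g y a) then exp 1 else 1)"
    using fS fV by (simp add: prod_sum_PiE)
  also have "\<dots> \<le> (\<Sum>g\<in>PiE B (\<lambda>_. V). \<Prod>y\<in>S. n * exp (e1 * ell g y / n))"
  proof (intro sum_mono prod_mono conjI)
    fix g y
    have sub: "{a\<in>A. t < real (bb E Y S g y a)} \<subseteq> V" using AV by auto
    have "(\<Sum>a\<in>V. if a \<in> A \<and> t < real (bb E Y S g y a) then exp 1 else 1) =
          (\<Sum>a\<in>V. if a \<in> {a\<in>A. t < real (bb E Y S g y a)} then exp 1 else 1)" by simp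
    also have "\<dots> = n + e1 * ell g y"
      using sum_if_const[OF fV sub, of "exp 1"] by (simp add: n_def e1_def ell_def algebra_simps)
    finally have eq: "(\<Sum>a\<in>V. if a \<in> A \<and> t < real (bb E Y S g y a) then exp 1 else 1) = n + e1 * ell g y" .
    show "0 \<le> (\<Sum>a\<in>V. if a \<in> A \<and> t < real (bb E Y S g y a) then exp 1 else (1::real))"
      unfolding eq using n0 e10 by simp
    have "n + e1 * ell g y = n * (1 + e1 * ell g y / n)" using n0 by (simp add: field_simps)
    also have "\<dots> \<le> n * exp (e1 * ell g y / n)" using n0 by (intro mult_left_mono) auto
    finally show "(\<Sum>a\<in>V. if a \<in> A \<and> t < real (bb E Y S g y a) then exp 1 else 1) \<le> n * exp (e1 * ell g y / n)"
      using eq by simp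
  qed
  also have "\<dots> = (\<Sum>g\<in>PiE B (\<lambda>_. V). n ^ card S * exp (e1 * (\<Sum>y\<in>S. real (ell g y)) / n))"
    using fS by (simp add: prod.distrib exp_sum sum_divide_distrib sum_distrib_left)
  also have "\<dots> \<le> (\<Sum>g\<in>PiE B (\<lambda>_. V). n ^ card S * exp (lam * (\<Sum>v'\<in>B. ww E S v' * (if g v' \<in> A then 1 else 0))))"
  proof (intro sum_mono mult_left_mono)
    fix g
    have "t * real (ell g y) \<le> zz E Y S A g y" for y
    proof -
      have "t * real (ell g y) = (\<Sum>a\<in>{a\<in>A. t < real (bb E Y S g y a)}. t)" by (simp add: ell_def)
      also have "\<dots> \<le> (\<Sum>a\<in>{a\<in>A. t < real (bb E Y S g y a)}. real (bb E Y S g y a))"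
        by (intro sum_mono) auto
      also have "\<dots> \<le> (\<Sum>a\<in>A. real (bb E Y S g y a))" using fA by (intro sum_mono2) auto
      also have "\<dots> \<le> zz E Y S A g y" by (rule bb_sum_le[OF fin fY fA])
      finally show ?thesis .
    qed
    then have "t * (\<Sum>y\<in>S. real (ell g y)) \<le> (\<Sum>y\<in>S. zz E Y S A g y)"
      by (simp add: sum_distrib_left sum_mono)
    also have "\<dots> = (\<Sum>v'\<in>B. ww E S v' * (if g v' \<in> A then 1 else 0))" by (simp add: zz_sum B_def)
    finally have "(\<Sum>y\<in>S. real (ell g y)) \<le> (\<Sum>v'\<in>B. ww E S v' * (if g v' \<in> A then 1 else 0)) / t"
      using t0 by (simp add: field_simps)
    then have "e1 * (\<Sum>y\<in>S. real (ell g y)) / n \<le> e1 * ((\<Sum>v'\<in>B. ww E S v' * (if g v' \<in> A then 1 else 0)) / t) / n"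
      using e10 n0 by (intro divide_right_mono mult_left_mono) auto
    then show "exp (e1 * (\<Sum>y\<in>S. real (ell g y)) / n) \<le> exp (lam * (\<Sum>v'\<in>B. ww E S v' * (if g v' \<in> A then 1 else 0)))"
      by (simp add: lam_def field_simps)
  qed (use n0 in auto)
  also have "\<dots> = n ^ card S * (\<Sum>g\<in>PiE B (\<lambda>_. V). \<Prod>v'\<in>B. if g v' \<in> A then exp (lam * ww E S v') else 1)"
  proof -
    have "exp (lam * (\<Sum>v'\<in>B. ww E S v' * (if g v' \<in> A then 1 else 0))) = (\<Prod>v'\<in>B. if g v' \<in> A then exp (lam * ww E S v') else 1)" for g
    proof -
      have "exp (lam * (\<Sum>v'\<in>B. ww E S v' * (if g v' \<in> A then 1 else 0))) = (\<Prod>v'\<in>B. exp (lam * (ww E S v' * (if g v' \<in> A then 1 else 0))))"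
        by (simp only: sum_distrib_left exp_sum[OF fB])
      also have "\<dots> = (\<Prod>v'\<in>B. if g v' \<in> A then exp (lam * ww E S v') else 1)"
        by (intro prod.cong refl) simp
      finally show ?thesis .
    qed
    then show ?thesis by (simp only: sum_distrib_left)
  qed
  also have "\<dots> = n ^ card S * (\<Prod>v'\<in>B. \<Sum>a\<in>V. if a \<in> A then exp (lam * ww E S v') else 1)"
    using fB fV by (simp add: prod_sum_PiE)
  also have "\<dots> \<le> n ^ card S * (\<Prod>v'\<in>B. n * exp (2 * lam * ww E S v' * card A / n))"
  proof (intro mult_left_mono prod_mono conjI)
    fix v' assume "v' \<in> B"
    have w0: "0 \<le> ww E S v'" unfolding ww_def by (intro sum_nonneg) auto
    have w1: "ww E S v' \<le> real d ^ 2" by (rule ww_le[OF sym fin deg fS])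
    have x1: "lam * ww E S v' \<le> 1"
    proof -
      have "lam * ww E S v' \<le> lam * real d ^ 2" using w1 lam0 by (intro mult_left_mono) auto
      also have "\<dots> \<le> 1" using small t0 n0 by (simp add: lam_def e1_def n_def field_simps)
      finally show ?thesis .
    qed
    have eq: "(\<Sum>a\<in>V. if a \<in> A then exp (lam * ww E S v') else 1) = card A * exp (lam * ww E S v') + (n - card A)"
      using sum_if_const[OF fV AV] by (simp add: n_def)
    have cA: "real (card A) \<le> n" using AV fV by (simp add: n_def card_mono)
    show "0 \<le> (\<Sum>a\<in>V. if a \<in> A then exp (lam * ww E S v') else (1::real))"
      by (intro sum_nonneg) auto
    have "card A * exp (lam * ww E S v') \<le> card A * (1 + 2 * (lam * ww E S v'))"
      using exp_le_lin[of "lam * ww E S v'"] x1 w0 lam0 by (intro mult_left_mono) auto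
    moreover have "n * (1 + 2 * lam * ww E S v' * card A / n) = n + 2 * lam * ww E S v' * card A"
      using n0 by (simp add: field_simps)
    ultimately have "card A * exp (lam * ww E S v') + (n - card A) \<le> n * (1 + 2 * lam * ww E S v' * card A / n)"
      by (simp add: algebra_simps)
    also have "\<dots> \<le> n * exp (2 * lam * ww E S v' * card A / n)"
      using n0 by (intro mult_left_mono) auto
    finally show "(\<Sum>a\<in>V. if a \<in> A then exp (lam * ww E S v') else 1) \<le> n * exp (2 * lam * ww E S v' * card A / n)"
      using eq by simp
  qed (use n0 in auto)
  also have "\<dots> = n ^ card S * (n ^ card B * exp (2 * lam * card A / n * (\<Sum>v'\<in>B. ww E S v')))"
  proof -
    have "(\<Prod>v'\<in>B. n * exp (2 * lam * ww E S v' * card A / n)) = n ^ card B * exp (\<Sum>v'\<in>B. 2 * lam * ww E S v' * card A / n)"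
      by (simp add: prod.distrib exp_sum[OF fB])
    moreover have "(\<Sum>v'\<in>B. 2 * lam * ww E S v' * card A / n) = 2 * lam * card A / n * (\<Sum>v'\<in>B. ww E S v')"
      by (simp add: sum_distrib_left sum_divide_distrib mult_ac)
    ultimately show ?thesis by simp
  qed
  also have "\<dots> \<le> n ^ card S * (n ^ card B * exp (2 * lam * card A / n * (real (card S) * real d ^ 2)))"
    using ww_sum_le[OF fin deg fY, of S] lam0 n0 unfolding B_def
    by (intro mult_left_mono) (auto intro!: mult_left_mono divide_right_mono)
  also have "\<dots> = n ^ card Y * exp (2 * (exp 1 - 1) * card A * card S * real d ^ 2 / (t * n ^ 2))"
  proof -
    have "card Y = card S + card B" using YSB fS fB by (metis card_Un_disjoint)
    then show ?thesis by (simp add: power_add lam_def e1_def power2_eq_square field_simps)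
  qed
  finally show ?thesis by (simp add: n_def)
qed



definition Nset :: "(nat \<Rightarrow> nat) \<Rightarrow> nat set \<Rightarrow> nat set \<Rightarrow> nat set" where
  "Nset col S A = {y\<in>S. col y \<in> A \<and> (\<exists>y'\<in>S. y' \<noteq> y \<and> col y' = col y)}"

definition matchings :: "nat set \<Rightarrow> nat \<Rightarrow> (nat \<times> nat) set set" where
  "matchings S q = {M. M \<subseteq> S \<times> S \<and> card M = q \<and> inj_on fst M \<and> inj_on snd M \<and> fst ` M \<inter> snd ` M = {}}"

definition evt :: "(nat \<times> nat) set \<Rightarrow> nat set \<Rightarrow> (nat \<Rightarrow> nat) set" where
  "evt M A = {col. \<forall>(a,b)\<in>M. col a = col b \<and> col a \<in> A}"

lemma Nset_step:
  assumes fS: "finite S" and y: "y \<in> S" "y' \<in> S" "y \<noteq> y'" "col y = col y'"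
  shows "card (Nset col S A) \<le> card (Nset col (S - {y, y'}) A) + 3"
proof -
  define S' where "S' = S - {y, y'}"
  define L where "L = {z\<in>S'. col z = col y \<and> (\<forall>z'\<in>S'. z' \<noteq> z \<longrightarrow> col z' \<noteq> col y)}"
  have sub: "Nset col S A \<subseteq> Nset col S' A \<union> {y, y'} \<union> L"
  proof
    fix z assume z: "z \<in> Nset col S A"
    show "z \<in> Nset col S' A \<union> {y, y'} \<union> L"
    proof (cases "z \<in> {y, y'}")
      case False
      then have zS': "z \<in> S'" using z by (auto simp: Nset_def S'_def)
      show ?thesis
      proof (cases "z \<in> Nset col S' A")
        case False
        from z obtain w where w: "w \<in> S" "w \<noteq> z" "col w = col z" and zA: "col z \<in> A"
          by (auto simp: Nset_def)
        have nw: "\<forall>z'\<in>S'. z' \<noteq> z \<longrightarrow> col z' \<noteq> col z" using False zS' zA by (auto simp: Nset_def)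
        then have "w \<notin> S'" using w by auto
        then have "w \<in> {y, y'}" using w by (auto simp: S'_def)
        then have "col z = col y" using w y by auto
        then have "z \<in> L" using zS' nw by (auto simp: L_def)
        then show ?thesis by auto
      qed auto
    qed auto
  qed
  have fin: "finite (Nset col S' A)" "finite L" using fS by (auto simp: Nset_def S'_def L_def)
  have L1: "card L \<le> 1"
    using card_le_Suc0_iff_eq[OF fin(2)] by (auto simp: L_def)
  have "card (Nset col S A) \<le> card (Nset col S' A \<union> {y, y'} \<union> L)"
    using sub fin by (intro card_mono) auto
  also have "\<dots> \<le> card (Nset col S' A) + card {y, y'} + card L"
    by (metis card_Un_le add_le_mono le_refl order_trans)
  also have "\<dots> \<le> card (Nset col S' A) + 3"
    using L1 card_insert_le[of "{y'}" y] by (simp add: card_insert_if) 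
  finally show ?thesis by (simp add: S'_def)
qed

lemma match_exists:
  "finite S \<Longrightarrow> 3 * q \<le> card (Nset col S A) \<Longrightarrow> \<exists>M\<in>matchings S q. col \<in> evt M A"
proof (induction q arbitrary: S)
  case 0
  then show ?case by (auto simp: matchings_def evt_def intro!: bexI[of _ "{}"])
next
  case (Suc q)
  then have "Nset col S A \<noteq> {}" by auto
  then obtain y where y: "y \<in> S" "col y \<in> A" and "\<exists>y'\<in>S. y' \<noteq> y \<and> col y' = col y"
    by (auto simp: Nset_def)
  then obtain y' where y': "y' \<in> S" "y' \<noteq> y" "col y' = col y" by blast
  define S' where "S' = S - {y, y'}"
  have "card (Nset col S A) \<le> card (Nset col S' A) + 3"
    unfolding S'_def using Suc.prems y y' by (intro Nset_step) auto
  then have q3: "3 * q \<le> card (Nset col S' A)" using Suc.prems by simp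
  have fS': "finite S'" using Suc.prems by (simp add: S'_def)
  obtain M' where M': "M' \<in> matchings S' q" "col \<in> evt M' A"
    using Suc.IH[OF fS' q3] by blast
  define M where "M = insert (y, y') M'"
  have sub: "M' \<subseteq> S' \<times> S'" using M' by (auto simp: matchings_def)
  have yn: "y \<notin> S'" "y' \<notin> S'" by (auto simp: S'_def)
  have nin: "(y, y') \<notin> M'" using sub yn by auto
  have fM': "finite M'"
  proof -
    have "finite (S' \<times> S')" using Suc.prems by (simp add: S'_def)
    then show ?thesis using sub finite_subset by blast
  qed
  have m': "card M' = q" "inj_on fst M'" "inj_on snd M'" "fst ` M' \<inter> snd ` M' = {}"
    using M'(1) by (auto simp: matchings_def)
  have c1: "M \<subseteq> S \<times> S" using sub y y' by (auto simp: M_def S'_def)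
  have c2: "card M = Suc q" using nin fM' m' by (simp add: M_def)
  have fsub: "fst ` M' \<subseteq> S'" "snd ` M' \<subseteq> S'" using sub by auto
  have c3: "inj_on fst M" using m'(2) fsub yn by (auto simp: M_def inj_on_def)
  have c4: "inj_on snd M" using m'(3) fsub yn by (auto simp: M_def inj_on_def)
  have c5: "fst ` M \<inter> snd ` M = {}" using m'(4) fsub yn y' by (auto simp: M_def)
  have c6: "col \<in> evt M A" using M'(2) y y' by (auto simp: M_def evt_def)
  show ?case using c1 c2 c3 c4 c5 c6 by (auto simp: matchings_def)
qed



lemma evt_count:
  assumes fY: "finite Y" and SY: "S \<subseteq> Y" and fV: "finite V" and AV: "A \<subseteq> V"
    and M: "M \<in> matchings S q"
  shows "real (card (PiE Y (\<lambda>_. V) \<inter> evt M A)) \<le> real (card A) ^ q * real (card V) ^ (card Y - 2 * q)"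
    and "2 * q \<le> card Y"
proof -
  define T where "T = snd ` M"
  define Fs where "Fs = fst ` M"
  define B where "B = Y - T"
  define fa where "fa b = fst (the_inv_into M snd b)" for b
  have MS: "M \<subseteq> S \<times> S" and cM: "card M = q" and i1: "inj_on fst M" and i2: "inj_on snd M"
    and dj: "Fs \<inter> T = {}" using M by (auto simp: matchings_def Fs_def T_def)
  have fS: "finite S" using fY SY finite_subset by blast
  have fM: "finite M" using MS fS finite_subset[of M "S \<times> S"] by blast
  have cT: "card T = q" using i2 cM by (simp add: T_def card_image)
  have cF: "card Fs = q" using i1 cM by (simp add: Fs_def card_image)
  have TY: "T \<subseteq> Y" and FY: "Fs \<subseteq> Y" using MS SY by (auto simp: T_def Fs_def)
  have FB: "Fs \<subseteq> B" using FY dj by (auto simp: B_def)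
  have fB: "finite B" using fY by (simp add: B_def)
  have fT: "finite T" using fY TY finite_subset by blast
  have cB: "card B = card Y - q" using fY TY cT by (simp add: B_def card_Diff_subset finite_subset)
  have cBF: "card (B - Fs) = card Y - 2 * q" using cB cF FB fB by (simp add: card_Diff_subset finite_subset)
  have "card Fs + card T \<le> card Y"
  proof -
    have "card (Fs \<union> T) \<le> card Y" using FY TY fY by (intro card_mono) auto
    then show ?thesis using dj fT fY FY finite_subset by (metis card_Un_disjoint)
  qed
  then show "2 * q \<le> card Y" using cF cT by simp
  have YTB: "T \<union> B = Y" "T \<inter> B = {}" using TY by (auto simp: B_def)
  have faM: "(fa b, b) \<in> M" if "b \<in> T" for b
  proof -
    have "the_inv_into M snd b \<in> M" using the_inv_into_into[OF i2 _ order_refl] that unfolding T_def by blast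
    moreover have "snd (the_inv_into M snd b) = b" using f_the_inv_into_f[OF i2] that unfolding T_def by blast
    ultimately show ?thesis unfolding fa_def by (metis prod.collapse)
  qed
  have faB: "fa b \<in> Fs" if "b \<in> T" for b using faM[OF that] by (force simp: Fs_def)
  let ?I = "\<lambda>col. (\<Prod>b\<in>T. if col b = col (fa b) then 1 else 0) * (\<Prod>a\<in>Fs. if col a \<in> A then 1 else (0::real))"
  have "real (card (PiE Y (\<lambda>_. V) \<inter> evt M A)) = (\<Sum>col\<in>PiE Y (\<lambda>_. V). if col \<in> evt M A then 1 else 0)"
  proof -
    have "PiE Y (\<lambda>_. V) \<inter> evt M A = {col \<in> PiE Y (\<lambda>_. V). col \<in> evt M A}" by auto
    then show ?thesis using card_filter_sum[of "PiE Y (\<lambda>_. V)" "\<lambda>col. col \<in> evt M A"] fY fV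
      by (simp add: finite_PiE)
  qed
  also have "\<dots> \<le> (\<Sum>col\<in>PiE Y (\<lambda>_. V). ?I col)"
  proof (intro sum_mono)
    fix col
    show "(if col \<in> evt M A then 1 else 0) \<le> ?I col"
    proof (cases "col \<in> evt M A")
      case True
      have "col b = col (fa b)" if "b \<in> T" for b using True faM[OF that] by (force simp: evt_def)
      moreover have "col a \<in> A" if "a \<in> Fs" for a using True that by (force simp: evt_def Fs_def)
      ultimately show ?thesis using True by simp
    next
      case False
      then show ?thesis by (simp add: prod_nonneg)
    qed
  qed
  also have "\<dots> = (\<Sum>g\<in>PiE B (\<lambda>_. V). \<Sum>h\<in>PiE T (\<lambda>_. V). (\<Prod>b\<in>T. if h b = g (fa b) then 1 else 0) * (\<Prod>a\<in>Fs. if g a \<in> A then 1 else (0::real)))"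
  proof -
    have "(\<Sum>col\<in>PiE Y (\<lambda>_. V). ?I col) = (\<Sum>col\<in>PiE (T \<union> B) (\<lambda>_. V). ?I col)" using YTB by simp
    also have "\<dots> = (\<Sum>g\<in>PiE B (\<lambda>_. V). \<Sum>h\<in>PiE T (\<lambda>_. V). ?I (\<lambda>i. if i \<in> T then h i else g i))"
      by (rule split_PiE_sum[OF YTB(2)])
    also have "\<dots> = (\<Sum>g\<in>PiE B (\<lambda>_. V). \<Sum>h\<in>PiE T (\<lambda>_. V). (\<Prod>b\<in>T. if h b = g (fa b) then 1 else 0) * (\<Prod>a\<in>Fs. if g a \<in> A then 1 else (0::real)))"
    proof -
      have nT: "\<And>b. b \<in> T \<Longrightarrow> fa b \<notin> T" using faB dj by auto
      have nT2: "\<And>a. a \<in> Fs \<Longrightarrow> a \<notin> T" using dj by auto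
      show ?thesis by (intro sum.cong refl arg_cong2[where f="(*)"] prod.cong) (auto simp: nT nT2)
    qed
    finally show ?thesis .
  qed
  also have "\<dots> = (\<Sum>g\<in>PiE B (\<lambda>_. V). (\<Prod>a\<in>Fs. if g a \<in> A then 1 else (0::real)))"
  proof (intro sum.cong refl)
    fix g assume g: "g \<in> PiE B (\<lambda>_. V)"
    have "(\<Sum>h\<in>PiE T (\<lambda>_. V). \<Prod>b\<in>T. if h b = g (fa b) then 1 else (0::real)) = (\<Prod>b\<in>T. \<Sum>v\<in>V. if v = g (fa b) then 1 else 0)"
      by (subst prod_sum_PiE) (use fT fV in auto)
    also have "\<dots> = 1"
    proof (intro prod.neutral ballI)
      fix b assume "b \<in> T"
      then have "g (fa b) \<in> V" using g faB FB by auto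
      then show "(\<Sum>v\<in>V. if v = g (fa b) then 1 else 0) = (1::real)" using fV by simp
    qed
    finally show "(\<Sum>h\<in>PiE T (\<lambda>_. V). (\<Prod>b\<in>T. if h b = g (fa b) then 1 else 0) * (\<Prod>a\<in>Fs. if g a \<in> A then 1 else (0::real)))
        = (\<Prod>a\<in>Fs. if g a \<in> A then 1 else (0::real))"
      by (simp add: sum_distrib_right[symmetric])
  qed
  also have "\<dots> = (\<Sum>g\<in>PiE B (\<lambda>_. V). \<Prod>i\<in>B. if i \<in> Fs then (if g i \<in> A then 1 else 0) else (1::real))"
    using FB fB by (intro sum.cong refl) (simp add: prod.If_cases Int_absorb1 Int_absorb2 Int_commute)
  also have "\<dots> = (\<Prod>i\<in>B. \<Sum>v\<in>V. if i \<in> Fs then (if v \<in> A then 1 else 0) else (1::real))"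
    using fB fV by (simp add: prod_sum_PiE)
  also have "\<dots> = (\<Prod>i\<in>B. if i \<in> Fs then real (card A) else real (card V))"
  proof (intro prod.cong refl)
    fix i
    have "(\<Sum>v\<in>V. if v \<in> A then 1 else (0::real)) = real (card A)"
      using AV fV by (simp add: sum.If_cases Int_absorb1 Int_absorb2 Int_commute)
    then show "(\<Sum>v\<in>V. if i \<in> Fs then (if v \<in> A then 1 else 0) else (1::real)) = (if i \<in> Fs then real (card A) else real (card V))"
      by simp
  qed
  also have "\<dots> = real (card A) ^ q * real (card V) ^ (card Y - 2 * q)"
  proof -
    have "(\<Prod>i\<in>B. if i \<in> Fs then real (card A) else real (card V)) =
      (\<Prod>i\<in>B \<inter> {i. i \<in> Fs}. real (card A)) * (\<Prod>i\<in>B \<inter> - {i. i \<in> Fs}. real (card V))"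
      using fB by (rule prod.If_cases)
    moreover have "B \<inter> {i. i \<in> Fs} = Fs" "B \<inter> - {i. i \<in> Fs} = B - Fs" using FB by auto
    ultimately show ?thesis using cF cBF by simp
  qed
  finally show "real (card (PiE Y (\<lambda>_. V) \<inter> evt M A)) \<le> real (card A) ^ q * real (card V) ^ (card Y - 2 * q)" .
qed



lemma card_F: "finite Y \<Longrightarrow> card (PiE Y (\<lambda>_. V)) = card V ^ card Y"
  by (simp add: card_PiE)

lemma F_ne: "V \<noteq> {} \<Longrightarrow> PiE Y (\<lambda>_. V) \<noteq> {}"
  by (simp add: PiE_eq_empty_iff)

lemma prob_T:
  assumes fY: "finite Y" and SY: "S \<subseteq> Y" and fV: "finite V" and AV: "A \<subseteq> V" and Vne: "V \<noteq> {}"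
  defines "\<mu> \<equiv> real (card S) * card A / card V"
  shows "measure_pmf.prob (pmf_of_set (PiE Y (\<lambda>_. V))) {col. real (card {y\<in>S. col y \<in> A}) \<le> 3/5 * \<mu>} \<le> exp (- \<mu> / 30)"
proof -
  let ?F = "PiE Y (\<lambda>_. V)"
  have fF: "finite ?F" using fY fV by (simp add: finite_PiE)
  have n0: "real (card V) > 0" using fV Vne by (simp add: card_gt_0_iff)
  have "measure_pmf.prob (pmf_of_set ?F) {col. real (card {y\<in>S. col y \<in> A}) \<le> 3/5 * \<mu>}
      \<le> (\<Sum>col\<in>?F. exp (3/10 * \<mu>) * exp (-(1/2) * real (card {y\<in>S. col y \<in> A}))) / card ?F"
  proof (rule prob_markov[OF fF F_ne[OF Vne]])
    fix col assume "col \<in> {col. real (card {y\<in>S. col y \<in> A}) \<le> 3/5 * \<mu>}"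
    then have "0 \<le> 3/10 * \<mu> + (-(1/2) * real (card {y\<in>S. col y \<in> A}))" by simp
    then show "1 \<le> exp (3/10 * \<mu>) * exp (-(1/2) * real (card {y\<in>S. col y \<in> A}))"
      by (simp add: exp_add[symmetric])
  qed simp
  also have "\<dots> = exp (3/10 * \<mu>) * (\<Sum>col\<in>?F. exp (-(1/2) * real (card {y\<in>S. col y \<in> A}))) / card ?F"
    by (simp add: sum_distrib_left)
  also have "\<dots> \<le> exp (3/10 * \<mu>) * (real (card V) ^ card Y * exp (- \<mu> / 3)) / card ?F"
    using T_sum_bound[OF fY SY fV AV Vne] unfolding \<mu>_def
    by (intro divide_right_mono mult_left_mono) auto
  also have "\<dots> = exp (- \<mu> / 30)"
    using n0 by (simp add: card_F[OF fY] exp_add[symmetric])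
  finally show ?thesis .
qed

lemma prob_U:
  fixes t :: real
  assumes fY: "finite Y" and SY: "S \<subseteq> Y" and fV: "finite V" and AV: "A \<subseteq> V" and Vne: "V \<noteq> {}"
    and t0: "t > 0"
    and sym: "\<And>u v. E u v \<Longrightarrow> E v u" and fin: "\<And>v. finite (nbhd E v)" and deg: "\<And>v. card (nbhd E v) \<le> d"
    and small: "(exp 1 - 1) * real d ^ 2 \<le> t * real (card V)"
  shows "measure_pmf.prob (pmf_of_set (PiE Y (\<lambda>_. V))) {col. r < real (card {y\<in>S. col y \<in> A \<and> t < real (bb E Y S col y (col y))})}
     \<le> exp (2 * (exp 1 - 1) * card A * card S * real d ^ 2 / (t * real (card V) ^ 2) - r)"
proof -
  let ?F = "PiE Y (\<lambda>_. V)"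
  let ?U = "\<lambda>col. real (card {y\<in>S. col y \<in> A \<and> t < real (bb E Y S col y (col y))})"
  have fF: "finite ?F" using fY fV by (simp add: finite_PiE)
  have n0: "real (card V) > 0" using fV Vne by (simp add: card_gt_0_iff)
  have "measure_pmf.prob (pmf_of_set ?F) {col. r < ?U col} \<le> (\<Sum>col\<in>?F. exp (- r) * exp (?U col)) / card ?F"
  proof (rule prob_markov[OF fF F_ne[OF Vne]])
    fix col assume "col \<in> {col. r < ?U col}"
    then show "1 \<le> exp (- r) * exp (?U col)" by (simp add: exp_add[symmetric])
  qed simp
  also have "\<dots> = exp (- r) * (\<Sum>col\<in>?F. exp (?U col)) / card ?F"
    by (simp add: sum_distrib_left)
  also have "\<dots> \<le> exp (- r) * (real (card V) ^ card Y * exp (2 * (exp 1 - 1) * card A * card S * real d ^ 2 / (t * real (card V) ^ 2))) / card ?F"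
    using U_sum_bound[OF fY SY fV AV Vne t0 sym fin deg small]
    by (intro divide_right_mono mult_left_mono) auto
  also have "\<dots> = exp (2 * (exp 1 - 1) * card A * card S * real d ^ 2 / (t * real (card V) ^ 2) - r)"
    using n0 by (simp add: card_F[OF fY] exp_add[symmetric] exp_diff)
  finally show ?thesis .
qed

lemma binom_bound: "real (m choose q) * fact q \<le> real m ^ q"
proof (cases "q \<le> m")
  case True
  have "fact q * fact (m - q) * (m choose q) = fact m" by (rule binomial_fact_lemma[OF True])
  moreover have "fact m div fact (m - q) \<le> m ^ q" by (rule fact_div_fact_le_pow[OF True])
  ultimately have "fact q * (m choose q) \<le> m ^ q"
    by (metis fact_nonzero mult.assoc mult.commute nonzero_mult_div_cancel_left)
  then have "real (fact q * (m choose q)) \<le> real (m ^ q)" by linarith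
  then show ?thesis by (simp add: mult.commute)
next
  case False
  then have z: "m choose q = 0" by (simp add: binomial_eq_0)
  show ?thesis unfolding z by simp
qed

lemma prob_N:
  assumes fY: "finite Y" and SY: "S \<subseteq> Y" and fV: "finite V" and AV: "A \<subseteq> V" and Vne: "V \<noteq> {}"
  shows "measure_pmf.prob (pmf_of_set (PiE Y (\<lambda>_. V))) {col. 3 * q \<le> card (Nset col S A)}
     \<le> real ((card S * card S) choose q) * real (card A) ^ q / real (card V) ^ (2 * q)"
proof -
  let ?F = "PiE Y (\<lambda>_. V)"
  let ?n = "real (card V)"
  have fF: "finite ?F" using fY fV by (simp add: finite_PiE)
  have fS: "finite S" using fY SY finite_subset by blast
  have n0: "?n > 0" using fV Vne by (simp add: card_gt_0_iff)
  have fMs: "finite (matchings S q)"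
  proof -
    have "matchings S q \<subseteq> Pow (S \<times> S)" by (auto simp: matchings_def)
    then show ?thesis using fS by (meson finite_Pow_iff finite_SigmaI finite_subset)
  qed
  have cMs: "card (matchings S q) \<le> (card S * card S) choose q"
  proof -
    have "matchings S q \<subseteq> {M. M \<subseteq> S \<times> S \<and> card M = q}" by (auto simp: matchings_def)
    then have "card (matchings S q) \<le> card {M. M \<subseteq> S \<times> S \<and> card M = q}"
      using fS by (intro card_mono) (auto intro: finite_subset[of _ "Pow (S \<times> S)"])
    also have "\<dots> = card (S \<times> S) choose q" using fS by (simp add: n_subsets)
    finally show ?thesis by (simp add: card_cartesian_product)
  qed
  have sub: "?F \<inter> {col. 3 * q \<le> card (Nset col S A)} \<subseteq> (\<Union>M\<in>matchings S q. ?F \<inter> evt M A)"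
    using match_exists[OF fS] by blast
  have "real (card (?F \<inter> {col. 3 * q \<le> card (Nset col S A)})) \<le>
        real (card (matchings S q)) * (real (card A) ^ q * ?n ^ (card Y - 2 * q))"
  proof -
    have "card (?F \<inter> {col. 3 * q \<le> card (Nset col S A)}) \<le> card (\<Union>M\<in>matchings S q. ?F \<inter> evt M A)"
      using sub fF by (intro card_mono) auto
    also have "\<dots> \<le> (\<Sum>M\<in>matchings S q. card (?F \<inter> evt M A))" by (rule card_UN_le[OF fMs])
    finally have "real (card (?F \<inter> {col. 3 * q \<le> card (Nset col S A)})) \<le> (\<Sum>M\<in>matchings S q. real (card (?F \<inter> evt M A)))"
      by (metis of_nat_le_iff of_nat_sum)
    also have "\<dots> \<le> (\<Sum>M\<in>matchings S q. real (card A) ^ q * ?n ^ (card Y - 2 * q))"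
      by (intro sum_mono evt_count[OF fY SY fV AV])
    finally show ?thesis by simp
  qed
  show ?thesis
  proof (cases "matchings S q = {}")
    case True
    then have "?F \<inter> {col. 3 * q \<le> card (Nset col S A)} = {}" using sub by auto
    then have "measure_pmf.prob (pmf_of_set ?F) {col. 3 * q \<le> card (Nset col S A)} = 0"
      using fF F_ne[OF Vne, of Y] by (subst measure_pmf_of_set) auto
    then show ?thesis using n0 by simp
  next
    case False
    then obtain M where "M \<in> matchings S q" by blast
    then have q2: "2 * q \<le> card Y" by (rule evt_count(2)[OF fY SY fV AV])
    have "measure_pmf.prob (pmf_of_set ?F) {col. 3 * q \<le> card (Nset col S A)}
        = real (card (?F \<inter> {col. 3 * q \<le> card (Nset col S A)})) / ?n ^ card Y"
      using fF F_ne[OF Vne, of Y] by (subst measure_pmf_of_set) (auto simp: card_F[OF fY])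
    also have "\<dots> \<le> real (card (matchings S q)) * (real (card A) ^ q * ?n ^ (card Y - 2 * q)) / ?n ^ card Y"
      using \<open>real (card (?F \<inter> _)) \<le> _\<close> n0 by (intro divide_right_mono) auto
    also have "\<dots> = real (card (matchings S q)) * real (card A) ^ q / ?n ^ (2 * q)"
    proof -
      have "?n ^ card Y = ?n ^ (card Y - 2 * q) * ?n ^ (2 * q)" using q2 by (simp add: power_add[symmetric])
      then show ?thesis using n0 by (simp add: field_simps)
    qed
    also have "\<dots> \<le> real ((card S * card S) choose q) * real (card A) ^ q / ?n ^ (2 * q)"
      using cMs n0 by (intro divide_right_mono mult_right_mono) auto
    finally show ?thesis .
  qed
qed



lemma W_ge:
  fixes EG EH :: "nat \<Rightarrow> nat \<Rightarrow> bool" and x c d :: nat and \<alpha> :: real and col :: "nat \<Rightarrow> nat" and Y :: "nat set"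
  assumes fin: "\<And>v. finite (nbhd EG v)" and SY: "nbhd EG x \<subseteq> Y"
  defines "S \<equiv> nbhd EG x" and "A \<equiv> nbhd EH c"
  shows "real (card {y\<in>S. col y \<in> A}) \<le> real (W EG Y EH \<alpha> d col x c)
     + real (card {y\<in>S. col y \<in> A \<and> real d / sqrt \<alpha> < real (bb EG Y S col y (col y))})
     + real (card (Nset col S A))"
proof -
  let ?t = "real d / sqrt \<alpha>"
  define Ws where "Ws = {y \<in> nbhd EG x. (\<forall>y' \<in> nbhd EG x. y' \<noteq> y \<longrightarrow> col y' \<noteq> col y)
     \<and> real (Bad EG Y col y) \<le> real d / sqrt \<alpha> \<and> EH c (col y)}"
  define Us where "Us = {y\<in>S. col y \<in> A \<and> ?t < real (bb EG Y S col y (col y))}"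
  have fS: "finite S" using fin by (simp add: S_def)
  have sub: "{y\<in>S. col y \<in> A} \<subseteq> Ws \<union> Us \<union> Nset col S A"
  proof
    fix y assume y: "y \<in> {y\<in>S. col y \<in> A}"
    show "y \<in> Ws \<union> Us \<union> Nset col S A"
    proof (cases "\<forall>y' \<in> S. y' \<noteq> y \<longrightarrow> col y' \<noteq> col y")
      case False
      then have "y \<in> Nset col S A" using y by (auto simp: Nset_def)
      then show ?thesis by auto
    next
      case True
      have "Bad EG Y col y \<le> bb EG Y S col y (col y)"
        unfolding Bad_def bb_def
      proof (rule card_mono[OF _ subsetI])
        show "finite {u \<in> nbhd EG y. \<exists>v'\<in>nbhd EG u. v' \<in> Y - S \<and> col v' = col y}" using fin by simp
      next
        fix u assume "u \<in> {u \<in> nbhd EG y. \<exists>v'\<in>nbhd EG u. v' \<noteq> y \<and> v' \<in> Y \<and> col v' = col y}"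
        then show "u \<in> {u \<in> nbhd EG y. \<exists>v'\<in>nbhd EG u. v' \<in> Y - S \<and> col v' = col y}"
          using True by auto
      qed
      show ?thesis
      proof (cases "real (Bad EG Y col y) \<le> ?t")
        case True2: True
        have "EH c (col y)" using y by (simp add: A_def nbhd_def)
        then have "y \<in> Ws" using True True2 y by (simp add: Ws_def S_def)
        then show ?thesis by auto
      next
        case False
        then have "y \<in> Us" using \<open>Bad EG Y col y \<le> _\<close> y by (auto simp: Us_def)
        then show ?thesis by auto
      qed
    qed
  qed
  have fW: "finite Ws" "finite Us" "finite (Nset col S A)" using fS
    by (auto simp: Ws_def Us_def Nset_def S_def)
  have "card {y\<in>S. col y \<in> A} \<le> card (Ws \<union> Us \<union> Nset col S A)"
    using fW by (intro card_mono[OF _ sub]) auto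
  also have "\<dots> \<le> card Ws + card Us + card (Nset col S A)"
    by (metis card_Un_le add_le_mono le_refl order_trans)
  finally have "real (card {y\<in>S. col y \<in> A}) \<le> real (card Ws) + real (card Us) + real (card (Nset col S A))"
    by linarith
  moreover have "W EG Y EH \<alpha> d col x c = card Ws" by (simp add: W_def Ws_def)
  ultimately show ?thesis by (simp add: Us_def)
qed



lemma e_bounds: "exp (1::real) \<le> 272/100" "exp (-1::real) \<ge> 1/3"
proof -
  show e: "exp (1::real) \<le> 272/100" using e_less_272 by simp
  have "exp 1 * exp (-1::real) = 1" by (simp add: exp_add[symmetric])
  moreover have "exp 1 * exp (-1::real) \<le> 3 * exp (-1)" using e by (intro mult_right_mono) auto
  ultimately show "exp (-1::real) \<ge> 1/3" by simp
qed

lemma N_arith: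
  fixes k q :: nat and a n \<mu> \<alpha> :: real
  assumes n0: "n > 0" and a0: "a \<ge> 0" and \<mu>: "\<mu> = real k * a / n" and kn: "real k * \<alpha> \<le> n"
    and q1: "q \<ge> 1" and qmu: "real q \<ge> \<mu> / 120" and \<alpha>: "\<alpha> \<ge> 25600" and \<mu>0: "\<mu> > 0"
  shows "real ((k * k) choose q) * a ^ q / n ^ (2 * q) \<le> exp (- \<mu> / 120)"
proof -
  define x where "x = real k * real k * a / n ^ 2"
  have x0: "x \<ge> 0" using a0 n0 by (simp add: x_def)
  have fq: "fact q > (0::real)" by simp
  have "real ((k * k) choose q) * a ^ q / n ^ (2 * q) \<le> (real (k * k) ^ q / fact q) * a ^ q / n ^ (2 * q)"
  proof -
    have "real ((k * k) choose q) \<le> real (k * k) ^ q / fact q"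
      using binom_bound[of "k * k" q] fq by (simp add: field_simps)
    then show ?thesis using a0 n0 by (intro divide_right_mono mult_right_mono) auto
  qed
  also have "\<dots> = x ^ q / fact q"
    by (simp add: x_def power_mult_distrib power_divide power_mult[symmetric] mult.commute)
  also have "\<dots> \<le> x ^ q * (exp (real q) / real q ^ q)"
  proof -
    have "real q ^ q \<le> exp (real q) * fact q" by (rule fact_lower)
    then have "1 / fact q \<le> exp (real q) / real q ^ q" using q1 fq by (simp add: field_simps)
    then show ?thesis using x0 by (simp add: divide_inverse mult_left_mono)
  qed
  also have "\<dots> = (x * exp 1 / real q) ^ q"
    by (simp add: power_mult_distrib power_divide exp_of_nat_mult[symmetric] mult.commute)
  also have "\<dots> \<le> exp (-1) ^ q"
  proof (rule power_mono)
    have xm: "x \<le> \<mu> / \<alpha>"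
    proof -
      have "x = \<mu> * (real k / n)" using \<mu> n0 by (simp add: x_def power2_eq_square field_simps)
      also have "real k / n \<le> 1 / \<alpha>" using kn n0 \<alpha> by (simp add: field_simps)
      then have "\<mu> * (real k / n) \<le> \<mu> * (1 / \<alpha>)" using \<mu>0 by (intro mult_left_mono) auto
      finally show ?thesis by simp
    qed
    have qpos: "real q > 0" using q1 by simp
    have "x * exp 1 / real q \<le> (\<mu> / \<alpha>) * exp 1 / (\<mu> / 120)"
    proof -
      have "x * exp 1 / real q \<le> (\<mu> / \<alpha>) * exp 1 / real q"
        using xm qpos by (intro divide_right_mono mult_right_mono) auto
      also have "\<dots> \<le> (\<mu> / \<alpha>) * exp 1 / (\<mu> / 120)"
        using qmu qpos \<mu>0 \<alpha> by (intro divide_left_mono) auto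
      finally show ?thesis .
    qed
    also have "\<dots> = 120 * exp 1 / \<alpha>" using \<mu>0 \<alpha> by (simp add: field_simps)
    also have "\<dots> \<le> 120 * (272/100) / 25600" using e_bounds(1) \<alpha>
      by (intro frac_le) auto
    also have "\<dots> \<le> exp (-1)" using e_bounds(2) by simp
    finally show "x * exp 1 / real q \<le> exp (-1)" .
    show "0 \<le> x * exp 1 / real q" using x0 by simp
  qed
  also have "\<dots> = exp (- real q)" by (simp add: exp_of_nat_mult[symmetric])
  also have "\<dots> \<le> exp (- \<mu> / 120)" using qmu by simp
  finally show ?thesis .
qed



theorem lemma8:
  fixes \<epsilon> \<beta> :: real
  assumes "\<epsilon> > 0" and "\<beta> > 0"
  shows "\<exists>\<alpha>0. \<forall>\<alpha> \<ge> \<alpha>0. \<exists>C > 0. \<exists>d0::nat. \<forall>d \<ge> d0.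
    \<forall>VH EH X Y EG x c.
      simple_graph VH EH \<longrightarrow> real (card VH) = \<alpha> * real d \<longrightarrow>
      real (max_deg VH EH) \<le> \<beta> * real (min_deg VH EH) \<longrightarrow>
      real (min_deg VH EH) > real d powr \<epsilon> \<longrightarrow>
      bipartite_graph X Y EG \<longrightarrow> (\<forall>v \<in> X \<union> Y. deg EG v \<le> d) \<longrightarrow>
      x \<in> X \<longrightarrow> d \<le> 2 * deg EG x \<longrightarrow> c \<in> VH \<longrightarrow>
      measure_pmf.prob (random_colouring Y VH)
        {col. real (W EG Y EH \<alpha> d col x c)
              \<le> (real (min_deg VH EH) / (\<alpha> * real d)) * real (deg EG x) / 2}
      \<le> exp (- C * real (min_deg VH EH))"
proof (rule exI[of _ "25600::real"], intro allI impI)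
  fix \<alpha> :: real assume \<alpha>: "25600 \<le> \<alpha>"
  define C where "C = 1 / (480 * \<alpha>)"
  define d0 :: nat where "d0 = nat \<lceil>(960 * \<alpha>) powr (1/\<epsilon>)\<rceil> + 2"
  have \<alpha>0: "\<alpha> > 0" using \<alpha> by simp
  have C0: "C > 0" using \<alpha>0 by (simp add: C_def)
  have main: "measure_pmf.prob (random_colouring Y VH)
        {col. real (W EG Y EH \<alpha> d col x c)
              \<le> (real (min_deg VH EH) / (\<alpha> * real d)) * real (deg EG x) / 2}
      \<le> exp (- C * real (min_deg VH EH))"
    if dd: "d0 \<le> d" and H: "simple_graph VH EH" and nV: "real (card VH) = \<alpha> * real d"
      and \<delta>d: "real (min_deg VH EH) > real d powr \<epsilon>"
      and G: "bipartite_graph X Y EG" and degb: "\<forall>v \<in> X \<union> Y. deg EG v \<le> d"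
      and xX: "x \<in> X" and dk: "d \<le> 2 * deg EG x" and cV: "c \<in> VH"
    for d VH EH X Y EG x c
  proof -
    define \<delta> where "\<delta> = real (min_deg VH EH)"
    define S where "S = nbhd EG x"
    define A where "A = nbhd EH c"
    define k where "k = deg EG x"
    define n where "n = real (card VH)"
    define \<mu> where "\<mu> = real (card S) * real (card A) / real (card VH)"
    define q where "q = nat \<lfloor>\<mu> / 60\<rfloor>"
    have fVH: "finite VH" using H by (simp add: simple_graph_def)
    have AV: "A \<subseteq> VH" using H by (auto simp: simple_graph_def A_def nbhd_def)
    have VHne: "VH \<noteq> {}" using cV by auto
    have cA: "card A = deg EH c" by (simp add: A_def deg_def)
    have \<delta>A: "\<delta> \<le> real (card A)"
    proof -
      have "min_deg VH EH \<le> deg EH c" unfolding min_deg_def using fVH cV by (intro Min_le) auto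
      then show ?thesis by (simp add: \<delta>_def cA)
    qed
    have Gs: "simple_graph (X \<union> Y) EG" and XY: "X \<inter> Y = {}"
      and side: "\<And>u v. EG u v \<Longrightarrow> (u \<in> X \<and> v \<in> Y) \<or> (u \<in> Y \<and> v \<in> X)"
      using G by (auto simp: bipartite_graph_def)
    have fXY: "finite (X \<union> Y)" and sym: "\<And>u v. EG u v \<Longrightarrow> EG v u"
      and inV: "\<And>u v. EG u v \<Longrightarrow> u \<in> X \<union> Y \<and> v \<in> X \<union> Y"
      using Gs by (auto simp: simple_graph_def)
    have fY: "finite Y" using fXY by simp
    have nbsub: "nbhd EG v \<subseteq> X \<union> Y" for v using inV by (auto simp: nbhd_def)
    have fin: "\<And>v. finite (nbhd EG v)" using nbsub fXY finite_subset by blast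
    have deg: "\<And>v. card (nbhd EG v) \<le> d"
    proof -
      fix v
      show "card (nbhd EG v) \<le> d"
      proof (cases "v \<in> X \<union> Y")
        case True then show ?thesis using degb by (simp add: deg_def)
      next
        case False
        then have "nbhd EG v = {}" using inV by (auto simp: nbhd_def)
        then show ?thesis by simp
      qed
    qed
    have SY: "S \<subseteq> Y" using side xX XY by (auto simp: S_def nbhd_def)
    have cS: "card S = k" by (simp add: S_def k_def deg_def)
    have kd: "k \<le> d" using deg[of x] by (simp add: k_def deg_def)
    have d2: "d \<ge> 2" using dd by (simp add: d0_def)
    have dpos: "real d > 0" using d2 by simp
    have n_eq: "n = \<alpha> * real d" using nV by (simp add: n_def)
    have n0: "n > 0" using n_eq \<alpha>0 dpos by simp
    have \<delta>big: "\<delta> \<ge> 960 * \<alpha>"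
    proof -
      have "(960 * \<alpha>) powr (1/\<epsilon>) \<le> real d"
      proof -
        have "(960 * \<alpha>) powr (1/\<epsilon>) \<le> real (nat \<lceil>(960 * \<alpha>) powr (1/\<epsilon>)\<rceil>)" by linarith
        also have "\<dots> \<le> real d" using dd by (simp add: d0_def)
        finally show ?thesis .
      qed
      then have "((960 * \<alpha>) powr (1/\<epsilon>)) powr \<epsilon> \<le> real d powr \<epsilon>"
        using assms(1) by (intro powr_mono2) auto
      moreover have "((960 * \<alpha>) powr (1/\<epsilon>)) powr \<epsilon> = 960 * \<alpha>"
        using assms(1) \<alpha>0 by (simp add: powr_powr)
      ultimately show ?thesis using \<delta>d by (simp add: \<delta>_def)
    qed
    have \<mu>_eq: "\<mu> = real k * real (card A) / n" by (simp add: \<mu>_def cS n_def)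
    have \<mu>\<delta>: "\<mu> \<ge> \<delta> / (2 * \<alpha>)"
    proof -
      have "real d \<le> 2 * real k" using dk by (simp add: k_def)
      then have "real d * \<delta> \<le> 2 * real k * real (card A)"
        using \<delta>A \<delta>big \<alpha>0 by (intro mult_mono) auto
      then have "\<delta> / (2 * \<alpha>) \<le> real k * real (card A) / (\<alpha> * real d)"
        using \<alpha>0 dpos by (simp add: field_simps)
      then show ?thesis using \<mu>_eq n_eq by simp
    qed
    have \<mu>480: "\<mu> \<ge> 480"
    proof -
      have h1: "\<delta> \<le> \<alpha> * (\<mu> * 2)" using \<mu>\<delta> \<alpha>0 by (simp add: divide_le_eq mult_ac)
      have "\<alpha> * 960 \<le> \<alpha> * (\<mu> * 2)" using h1 \<delta>big by linarith
      then have "960 \<le> \<mu> * 2" using \<alpha>0 by (simp add: mult_le_cancel_left_pos)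
      then show ?thesis by simp
    qed
    have \<mu>0: "\<mu> > 0" using \<mu>480 by simp
    let ?F = "PiE Y (\<lambda>_. VH)"
    let ?t = "real d / sqrt \<alpha>"
    define ET where "ET = {col. real (card {y\<in>S. col y \<in> A}) \<le> 3/5 * \<mu>}"
    define EU where "EU = {col. \<mu> / 20 < real (card {y\<in>S. col y \<in> A \<and> ?t < real (bb EG Y S col y (col y))})}"
    define EN where "EN = {col. 3 * q \<le> card (Nset col S A)}"
    have q3: "real (3 * q) \<le> \<mu> / 20"
    proof -
      have rq: "real q = of_int \<lfloor>\<mu> / 60\<rfloor>" using \<mu>0 by (simp add: q_def)
      have "real q \<le> \<mu> / 60" unfolding rq using floor_correct[of "\<mu> / 60"] by linarith
      then show ?thesis by simp
    qed
    have thr: "(real (min_deg VH EH) / (\<alpha> * real d)) * real (deg EG x) / 2 \<le> \<mu> / 2"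
    proof -
      have "\<delta> / n * real k \<le> real (card A) / n * real k"
        using \<delta>A n0 by (intro mult_right_mono divide_right_mono) auto
      moreover have "(real (min_deg VH EH) / (\<alpha> * real d)) * real (deg EG x) / 2 = (\<delta> / n * real k) / 2"
        using n_eq by (simp add: \<delta>_def k_def)
      moreover have "\<mu> / 2 = (real (card A) / n * real k) / 2" by (simp add: \<mu>_eq)
      ultimately show ?thesis by simp
    qed
    have incl: "{col. real (W EG Y EH \<alpha> d col x c) \<le> (real (min_deg VH EH) / (\<alpha> * real d)) * real (deg EG x) / 2}
        \<subseteq> ET \<union> EU \<union> EN"
    proof
      fix col assume cw: "col \<in> {col. real (W EG Y EH \<alpha> d col x c) \<le> (real (min_deg VH EH) / (\<alpha> * real d)) * real (deg EG x) / 2}"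
      show "col \<in> ET \<union> EU \<union> EN"
      proof (rule ccontr)
        assume "col \<notin> ET \<union> EU \<union> EN"
        then have a1: "real (card {y\<in>S. col y \<in> A}) > 3/5 * \<mu>"
          and a2: "real (card {y\<in>S. col y \<in> A \<and> ?t < real (bb EG Y S col y (col y))}) \<le> \<mu> / 20"
          and a3: "card (Nset col S A) < 3 * q"
          by (auto simp: ET_def EU_def EN_def)
        have a3': "real (card (Nset col S A)) \<le> \<mu> / 20" using a3 q3
          by (metis less_imp_le of_nat_le_iff order_trans)
        have "real (card {y\<in>S. col y \<in> A}) \<le> real (W EG Y EH \<alpha> d col x c)
            + real (card {y\<in>S. col y \<in> A \<and> ?t < real (bb EG Y S col y (col y))})
            + real (card (Nset col S A))"
          unfolding S_def A_def by (rule W_ge[OF fin SY[unfolded S_def]])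
        then show False using a1 a2 a3' cw thr by simp
      qed
    qed
    have PT: "measure_pmf.prob (pmf_of_set ?F) ET \<le> exp (- \<mu> / 30)"
      unfolding ET_def \<mu>_def by (rule prob_T[OF fY SY fVH AV VHne])
    have PU: "measure_pmf.prob (pmf_of_set ?F) EU \<le> exp (- \<mu> / 40)"
    proof -
      have sa: "sqrt \<alpha> \<ge> 160" using real_sqrt_le_mono[OF \<alpha>] by simp
      have sq: "sqrt \<alpha> * sqrt \<alpha> = \<alpha>" using \<alpha>0 by simp
      have t0: "?t > 0" using dpos \<alpha>0 by simp
      have tn: "?t * real (card VH) = sqrt \<alpha> * real d ^ 2"
        using nV sq \<alpha>0 by (simp add: power2_eq_square field_simps)
      have e2: "exp 1 - 1 \<le> (2::real)" using e_bounds(1) by simp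
      have small: "(exp 1 - 1) * real d ^ 2 \<le> ?t * real (card VH)"
        unfolding tn using e2 sa by (intro mult_right_mono) auto
      have "measure_pmf.prob (pmf_of_set ?F) EU \<le>
          exp (2 * (exp 1 - 1) * card A * card S * real d ^ 2 / (?t * real (card VH) ^ 2) - \<mu> / 20)"
        unfolding EU_def by (rule prob_U[OF fY SY fVH AV VHne t0 sym fin deg small])
      also have "2 * (exp 1 - 1) * card A * card S * real d ^ 2 / (?t * real (card VH) ^ 2) = 2 * (exp 1 - 1) * \<mu> / sqrt \<alpha>"
      proof -
        have "?t * real (card VH) ^ 2 = (?t * real (card VH)) * real (card VH)" by (simp add: power2_eq_square)
        also have "\<dots> = sqrt \<alpha> * real d ^ 2 * real (card VH)" using tn by simp
        finally have "2 * (exp 1 - 1) * card A * card S * real d ^ 2 / (?t * real (card VH) ^ 2)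
           = 2 * (exp 1 - 1) * card A * card S * real d ^ 2 / (sqrt \<alpha> * real d ^ 2 * real (card VH))" by simp
        also have "\<dots> = 2 * (exp 1 - 1) * \<mu> / sqrt \<alpha>"
        proof -
          have d2p: "real d ^ 2 \<noteq> 0" using dpos by simp
          have sp: "sqrt \<alpha> \<noteq> 0" using \<alpha>0 by simp
          have np: "real (card VH) \<noteq> 0" using n0 by (simp add: n_def)
          show ?thesis using d2p sp np unfolding \<mu>_def by (simp add: field_simps)
        qed
        finally show ?thesis .
      qed
      also have "2 * (exp 1 - 1) * \<mu> / sqrt \<alpha> \<le> \<mu> / 40"
      proof -
        have "2 * (exp 1 - 1) * \<mu> \<le> 4 * \<mu>" using e2 \<mu>0 by simp
        also have "4 * \<mu> \<le> sqrt \<alpha> * (\<mu> / 40)" using sa \<mu>0 by (simp add: field_simps)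
        finally have h: "2 * (exp 1 - 1) * \<mu> \<le> (\<mu> / 40) * sqrt \<alpha>" by (simp add: mult.commute)
        have sp: "sqrt \<alpha> > 0" using \<alpha>0 by simp
        show ?thesis using h sp by (simp only: pos_divide_le_eq)
      qed
      then have "exp (2 * (exp 1 - 1) * \<mu> / sqrt \<alpha> - \<mu> / 20) \<le> exp (- \<mu> / 40)" by simp
      finally show ?thesis .
    qed
    have PN: "measure_pmf.prob (pmf_of_set ?F) EN \<le> exp (- \<mu> / 120)"
    proof -
      have "measure_pmf.prob (pmf_of_set ?F) EN \<le> real ((card S * card S) choose q) * real (card A) ^ q / real (card VH) ^ (2 * q)"
        unfolding EN_def by (rule prob_N[OF fY SY fVH AV VHne])
      also have "\<dots> \<le> exp (- \<mu> / 120)"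
      proof (rule N_arith[where \<alpha> = \<alpha>])
        show "real (card VH) > 0" using n0 by (simp add: n_def)
        show "real (card S) * \<alpha> \<le> real (card VH)" using kd cS nV \<alpha>0 by (simp add: mult.commute)
        have rq: "real q = of_int \<lfloor>\<mu> / 60\<rfloor>" using \<mu>0 by (simp add: q_def)
        have "real q \<ge> \<mu> / 60 - 1" unfolding rq using floor_correct[of "\<mu> / 60"] by linarith
        then show "real q \<ge> \<mu> / 120" using \<mu>480 by simp
        then show "q \<ge> 1" using \<mu>480 by simp
      qed (use \<alpha> \<mu>0 in \<open>auto simp: \<mu>_def\<close>)
      finally show ?thesis .
    qed
    have "measure_pmf.prob (random_colouring Y VH)
        {col. real (W EG Y EH \<alpha> d col x c) \<le> (real (min_deg VH EH) / (\<alpha> * real d)) * real (deg EG x) / 2}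
        \<le> measure_pmf.prob (pmf_of_set ?F) (ET \<union> EU \<union> EN)"
      unfolding random_colouring_def by (rule measure_pmf.finite_measure_mono[OF incl]) simp
    also have "\<dots> \<le> measure_pmf.prob (pmf_of_set ?F) (ET \<union> EU) + measure_pmf.prob (pmf_of_set ?F) EN"
      by (rule measure_Un_le) auto
    also have "\<dots> \<le> measure_pmf.prob (pmf_of_set ?F) ET + measure_pmf.prob (pmf_of_set ?F) EU + measure_pmf.prob (pmf_of_set ?F) EN"
      using measure_Un_le[of ET "measure_pmf (pmf_of_set ?F)" EU] by simp
    also have "\<dots> \<le> exp (- \<mu> / 30) + exp (- \<mu> / 40) + exp (- \<mu> / 120)" using PT PU PN by simp
    also have "\<dots> \<le> 3 * exp (- \<mu> / 120)"
    proof -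
      have "exp (- \<mu> / 30) \<le> exp (- \<mu> / 120)" "exp (- \<mu> / 40) \<le> exp (- \<mu> / 120)" using \<mu>0 by simp_all
      then show ?thesis by linarith
    qed
    also have "\<dots> \<le> exp (- \<mu> / 240)"
    proof -
      have "3 \<le> exp (\<mu> / 240)"
      proof -
        have "1 + \<mu> / 240 \<le> exp (\<mu> / 240)" by (rule exp_ge_add_one_self)
        moreover have "3 \<le> 1 + \<mu> / 240" using \<mu>480 by simp
        ultimately show ?thesis by linarith
      qed
      then have "3 * exp (- \<mu> / 240) \<le> 1"
        by (metis exp_minus_inverse minus_divide_left mult_right_mono exp_ge_zero mult.commute order_trans)
      moreover have "exp (- \<mu> / 120) = exp (- \<mu> / 240) * exp (- \<mu> / 240)" by (simp add: exp_add[symmetric])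
      ultimately show ?thesis by (simp add: mult_right_le_one_le)
    qed
    also have "\<dots> \<le> exp (- C * \<delta>)"
    proof -
      have "C * \<delta> = \<delta> / (2 * \<alpha>) / 240" using \<alpha>0 by (simp add: C_def field_simps)
      then have "C * \<delta> \<le> \<mu> / 240" using \<mu>\<delta> by simp
      then show ?thesis by simp
    qed
    finally show ?thesis by (simp add: \<delta>_def)
  qed
  show "\<exists>C>0. \<exists>d0::nat. \<forall>d\<ge>d0. \<forall>VH EH X Y EG x c.
      simple_graph VH EH \<longrightarrow> real (card VH) = \<alpha> * real d \<longrightarrow>
      real (max_deg VH EH) \<le> \<beta> * real (min_deg VH EH) \<longrightarrow>
      real (min_deg VH EH) > real d powr \<epsilon> \<longrightarrow>
      bipartite_graph X Y EG \<longrightarrow> (\<forall>v \<in> X \<union> Y. deg EG v \<le> d) \<longrightarrow>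
      x \<in> X \<longrightarrow> d \<le> 2 * deg EG x \<longrightarrow> c \<in> VH \<longrightarrow>
      measure_pmf.prob (random_colouring Y VH)
        {col. real (W EG Y EH \<alpha> d col x c)
              \<le> (real (min_deg VH EH) / (\<alpha> * real d)) * real (deg EG x) / 2}
      \<le> exp (- C * real (min_deg VH EH))"
    using C0 main by blast
qed


end
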